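(* Let $M$ be a simply-connected domain in $\mathbb{R}^2(u,v)$, let $\omega,H,Q,R:M\to\mathbb{R}$ be smooth, and let $\Phi=(\Phi_1,\Phi_2)$ and $\Psi=(\Psi_1,\Psi_2)$, $M\to\mathrm{SL}_2\mathbb{R}\times\mathrm{SL}_2\mathbb{R}$, solve the Lax systems (L1) and (L2) below, respectively. Write $\Phi_1=\begin{pmatrix}\Phi_{11}&\Phi_{12}\\\Phi_{13}&\Phi_{14}\end{pmatrix}$, $\Phi_2=\begin{pmatrix}\Phi_{21}&\Phi_{22}\\\Phi_{23}&\Phi_{24}\end{pmatrix}$, and similarly for $\Psi$. Define the projected hyperbolic Gauss maps $G^+_\Phi=\big(\tfrac{\Phi_{11}}{\Phi_{13}},\tfrac{\Phi_{21}}{\Phi_{23}}\big)$, $G^-_\Phi=\big(\tfrac{\Phi_{12}}{\Phi_{14}},\tfrac{\Phi_{22}}{\Phi_{24}}\big)$, $G^+_\Psi=\big(\tfrac{\Psi_{11}}{\Psi_{13}},-\tfrac{\Psi_{24}}{\Psi_{22}}\big)$, $G^-_\Psi=\big(\tfrac{\Psi_{12}}{\Psi_{14}},-\tfrac{\Psi_{23}}{\Psi_{21}}\big)$, each considered on an open set $W\subset M$ where its denominators do not vanish. Then on such $W$: (1) $\partial_uG^+_\Phi\equiv0$ (resp. $\partial_uG^+_\Psi\equiv0$) iff $H\equiv1$ and $Q\equiv0$; (2) $\partial_vG^+_\Phi\equiv0$ (resp. $\partial_vG^+_\Psi\equiv0$) iff $H\equiv1$ and $R\equiv0$; (3) $\partial_uG^-_\Phi\equiv0$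 (resp. $\partial_uG^-_\Psi\equiv0$) iff $H\equiv-1$ and $Q\equiv0$; (4) $\partial_vG^-_\Phi\equiv0$ (resp. $\partial_vG^-_\Psi\equiv0$) iff $H\equiv-1$ and $R\equiv0$.
   Context: (L1): $(\Phi_1)_u=\Phi_1\mathcal U_1$, $(\Phi_1)_v=\Phi_1\mathcal V_1$, $(\Phi_2)_u=\Phi_2\mathcal U_2$, $(\Phi_2)_v=\Phi_2\mathcal V_2$ with $\mathcal U_1=\begin{pmatrix}\frac{\omega_u}{4}&\frac12e^{\omega/2}(H+1)\\-e^{-\omega/2}Q&-\frac{\omega_u}{4}\end{pmatrix}$, $\mathcal V_1=\begin{pmatrix}-\frac{\omega_v}{4}&e^{-\omega/2}R\\-\frac12e^{\omega/2}(H-1)&\frac{\omega_v}{4}\end{pmatrix}$, $\mathcal U_2=\begin{pmatrix}-\frac{\omega_u}{4}&e^{-\omega/2}Q\\-\frac12e^{\omega/2}(H-1)&\frac{\omega_u}{4}\end{pmatrix}$, $\mathcal V_2=\begin{pmatrix}\frac{\omega_v}{4}&\frac12e^{\omega/2}(H+1)\\-e^{-\omega/2}R&-\frac{\omega_v}{4}\end{pmatrix}$. (L2): $(\Psi_1)_u=\Psi_1\mathcal U_1$, $(\Psi_1)_v=\Psi_1\mathcal V_1$ (same $\mathcal U_1,\mathcal V_1$), $(\Psi_2)_u=\Psi_2\begin{pmatrix}\frac{\omega_u}{4}&\frac12e^{\omega/2}(H-1)\\-e^{-\omega/2}Q&-\frac{\omega_u}{4}\end{pmatrix}$, $(\Psi_2)_v=\Psi_2\begin{pmatrix}-\frac{\omega_v}{4}&e^{-\omega/2}R\\-\frac12e^{\omega/2}(H+1)&\frac{\omega_v}{4}\end{pmatrix}$.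 These are the frames of the timelike surfaces $\varphi=\Phi_1\Phi_2^t$ and $\psi=\Psi_1\Psi_2^{-1}$ in $\mathbb{H}^3_1(-1)\cong\mathrm{SL}_2\mathbb{R}$ with metric $e^\omega du\,dv$, mean curvature $H$ and Hopf pairs $Q,R$; $G^\pm$ are the images of the null lines $[\varphi\pm N]$ in $\mathbb{R}^2(u,v)$. A map with $\partial_u=0$ is called Lorentz antiholomorphic, with $\partial_v=0$ Lorentz holomorphic. *)

theory Defs
  imports "HOL-Analysis.Analysis"
begin

definition has_pd_u :: "(real \<times> real \<Rightarrow> 'a::real_normed_vector) \<Rightarrow> real \<times> real \<Rightarrow> 'a \<Rightarrow> bool" where
  "has_pd_u f p D \<longleftrightarrow> ((\<lambda>t. f (t, snd p)) has_vector_derivative D) (at (fst p))"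

definition has_pd_v :: "(real \<times> real \<Rightarrow> 'a::real_normed_vector) \<Rightarrow> real \<times> real \<Rightarrow> 'a \<Rightarrow> bool" where
  "has_pd_v f p D \<longleftrightarrow> ((\<lambda>t. f (fst p, t)) has_vector_derivative D) (at (snd p))"

coinductive smooth_on2 :: "(real \<times> real) set \<Rightarrow> (real \<times> real \<Rightarrow> real) \<Rightarrow> bool" where
  "\<lbrakk> continuous_on S f;
     \<forall>p\<in>S. has_pd_u f p (fu p); \<forall>p\<in>S. has_pd_v f p (fv p);
     smooth_on2 S fu; smooth_on2 S fv \<rbrakk> \<Longrightarrow> smooth_on2 S f"

definition mat2 :: "real \<Rightarrow> real \<Rightarrow> real \<Rightarrow> real \<Rightarrow> real^2^2" where
  "mat2 a b c d = (\<chi> i j. if i = 1 then (if j = 1 then a else b) else (if j = 1 then c else d))"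

text \<open>Entries: for X = ((X1 X2),(X3 X4)), X1 = X$1$1, X2 = X$1$2, X3 = X$2$1, X4 = X$2$2.\<close>

definition in_SL2 :: "real^2^2 \<Rightarrow> bool" where
  "in_SL2 X \<longleftrightarrow> det X = 1"

definition U1 :: "real \<Rightarrow> real \<Rightarrow> real \<Rightarrow> real \<Rightarrow> real^2^2" where
  "U1 w wu H Q = mat2 (wu/4) (exp (w/2) * (H+1) / 2) (- exp (-w/2) * Q) (- wu/4)"

definition V1 :: "real \<Rightarrow> real \<Rightarrow> real \<Rightarrow> real \<Rightarrow> real^2^2" where
  "V1 w wv H R = mat2 (- wv/4) (exp (-w/2) * R) (- exp (w/2) * (H-1) / 2) (wv/4)"

definition U2 :: "real \<Rightarrow> real \<Rightarrow> real \<Rightarrow> real \<Rightarrow> real^2^2" where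
  "U2 w wu H Q = mat2 (- wu/4) (exp (-w/2) * Q) (- exp (w/2) * (H-1) / 2) (wu/4)"

definition V2 :: "real \<Rightarrow> real \<Rightarrow> real \<Rightarrow> real \<Rightarrow> real^2^2" where
  "V2 w wv H R = mat2 (wv/4) (exp (w/2) * (H+1) / 2) (- exp (-w/2) * R) (- wv/4)"

definition U2' :: "real \<Rightarrow> real \<Rightarrow> real \<Rightarrow> real \<Rightarrow> real^2^2" where
  "U2' w wu H Q = mat2 (wu/4) (exp (w/2) * (H-1) / 2) (- exp (-w/2) * Q) (- wu/4)"

definition V2' :: "real \<Rightarrow> real \<Rightarrow> real \<Rightarrow> real \<Rightarrow> real^2^2" where
  "V2' w wv H R = mat2 (- wv/4) (exp (-w/2) * R) (- exp (w/2) * (H+1) / 2) (wv/4)"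

definition Gp_Phi :: "(real\<times>real \<Rightarrow> real^2^2) \<Rightarrow> (real\<times>real \<Rightarrow> real^2^2) \<Rightarrow> real\<times>real \<Rightarrow> real \<times> real" where
  "Gp_Phi P1 P2 p = (P1 p $1$1 / P1 p $2$1, P2 p $1$1 / P2 p $2$1)"

definition Gm_Phi :: "(real\<times>real \<Rightarrow> real^2^2) \<Rightarrow> (real\<times>real \<Rightarrow> real^2^2) \<Rightarrow> real\<times>real \<Rightarrow> real \<times> real" where
  "Gm_Phi P1 P2 p = (P1 p $1$2 / P1 p $2$2, P2 p $1$2 / P2 p $2$2)"

definition Gp_Psi :: "(real\<times>real \<Rightarrow> real^2^2) \<Rightarrow> (real\<times>real \<Rightarrow> real^2^2) \<Rightarrow> real\<times>real \<Rightarrow> real \<times> real" where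
  "Gp_Psi P1 P2 p = (P1 p $1$1 / P1 p $2$1, - (P2 p $2$2 / P2 p $1$2))"

definition Gm_Psi :: "(real\<times>real \<Rightarrow> real^2^2) \<Rightarrow> (real\<times>real \<Rightarrow> real^2^2) \<Rightarrow> real\<times>real \<Rightarrow> real \<times> real" where
  "Gm_Psi P1 P2 p = (P1 p $1$2 / P1 p $2$2, - (P2 p $2$1 / P2 p $1$1))"

end

theory Submission
  imports Defs
begin


lemma pd_u_entry:
  fixes P :: "real\<times>real \<Rightarrow> real^2^2" and i j :: 2
  assumes "has_pd_u P p D"
  shows "has_pd_u (\<lambda>q. P q $ i $ j) p (D $ i $ j)"
proof -
  have bl: "bounded_linear (\<lambda>X::real^2^2. X $ i $ j)"
    by (rule bounded_linear_compose[OF bounded_linear_vec_nth bounded_linear_vec_nth])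
  show ?thesis using bounded_linear.has_vector_derivative[OF bl assms[unfolded has_pd_u_def]]
    by (simp add: has_pd_u_def)
qed

lemma pd_v_entry:
  fixes P :: "real\<times>real \<Rightarrow> real^2^2" and i j :: 2
  assumes "has_pd_v P p D"
  shows "has_pd_v (\<lambda>q. P q $ i $ j) p (D $ i $ j)"
proof -
  have bl: "bounded_linear (\<lambda>X::real^2^2. X $ i $ j)"
    by (rule bounded_linear_compose[OF bounded_linear_vec_nth bounded_linear_vec_nth])
  show ?thesis using bounded_linear.has_vector_derivative[OF bl assms[unfolded has_pd_v_def]]
    by (simp add: has_pd_v_def)
qed

lemma pd_u_div:
  fixes a c :: "real\<times>real \<Rightarrow> real"
  assumes "has_pd_u a p a'" "has_pd_u c p c'" "c p \<noteq> 0"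
  shows "has_pd_u (\<lambda>q. a q / c q) p ((a' * c p - a p * c') / (c p)^2)"
proof -
  have 1: "((\<lambda>t. a (t, snd p)) has_real_derivative a') (at (fst p))"
    using assms(1) by (simp add: has_pd_u_def has_real_derivative_iff_has_vector_derivative)
  have 2: "((\<lambda>t. c (t, snd p)) has_real_derivative c') (at (fst p))"
    using assms(2) by (simp add: has_pd_u_def has_real_derivative_iff_has_vector_derivative)
  have "((\<lambda>t. a (t, snd p) / c (t, snd p)) has_real_derivative
     (a' * c p - c' * a p) / (c p * c p)) (at (fst p))"
    using DERIV_divide[OF 1 2] assms(3) by (simp add: mult.commute)
  then show ?thesis
    by (simp add: has_pd_u_def has_real_derivative_iff_has_vector_derivative power2_eq_square mult.commute)
qed

lemma pd_v_div:
  fixes a c :: "real\<times>real \<Rightarrow> real"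
  assumes "has_pd_v a p a'" "has_pd_v c p c'" "c p \<noteq> 0"
  shows "has_pd_v (\<lambda>q. a q / c q) p ((a' * c p - a p * c') / (c p)^2)"
proof -
  have 1: "((\<lambda>t. a (fst p, t)) has_real_derivative a') (at (snd p))"
    using assms(1) by (simp add: has_pd_v_def has_real_derivative_iff_has_vector_derivative)
  have 2: "((\<lambda>t. c (fst p, t)) has_real_derivative c') (at (snd p))"
    using assms(2) by (simp add: has_pd_v_def has_real_derivative_iff_has_vector_derivative)
  have "((\<lambda>t. a (fst p, t) / c (fst p, t)) has_real_derivative
     (a' * c p - c' * a p) / (c p * c p)) (at (snd p))"
    using DERIV_divide[OF 1 2] assms(3) by (simp add: mult.commute)
  then show ?thesis
    by (simp add: has_pd_v_def has_real_derivative_iff_has_vector_derivative power2_eq_square mult.commute)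
qed

lemma pd_u_pair0:
  fixes f g :: "real\<times>real \<Rightarrow> real"
  shows "has_pd_u (\<lambda>q. (f q, g q)) p (0,0) \<longleftrightarrow> has_pd_u f p 0 \<and> has_pd_u g p 0"
proof
  assume h: "has_pd_u (\<lambda>q. (f q, g q)) p (0,0)"
  show "has_pd_u f p 0 \<and> has_pd_u g p 0"
    using bounded_linear.has_vector_derivative[OF bounded_linear_fst h[unfolded has_pd_u_def]]
      bounded_linear.has_vector_derivative[OF bounded_linear_snd h[unfolded has_pd_u_def]]
    by (simp add: has_pd_u_def)
next
  assume "has_pd_u f p 0 \<and> has_pd_u g p 0"
  then show "has_pd_u (\<lambda>q. (f q, g q)) p (0,0)"
    unfolding has_pd_u_def using has_vector_derivative_Pair by fastforce
qed

lemma pd_v_pair0: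
  fixes f g :: "real\<times>real \<Rightarrow> real"
  shows "has_pd_v (\<lambda>q. (f q, g q)) p (0,0) \<longleftrightarrow> has_pd_v f p 0 \<and> has_pd_v g p 0"
proof
  assume h: "has_pd_v (\<lambda>q. (f q, g q)) p (0,0)"
  show "has_pd_v f p 0 \<and> has_pd_v g p 0"
    using bounded_linear.has_vector_derivative[OF bounded_linear_fst h[unfolded has_pd_v_def]]
      bounded_linear.has_vector_derivative[OF bounded_linear_snd h[unfolded has_pd_v_def]]
    by (simp add: has_pd_v_def)
next
  assume "has_pd_v f p 0 \<and> has_pd_v g p 0"
  then show "has_pd_v (\<lambda>q. (f q, g q)) p (0,0)"
    unfolding has_pd_v_def using has_vector_derivative_Pair by fastforce
qed

lemma pd_u_neg0: "has_pd_u (\<lambda>q. - (f q::real)) p 0 \<longleftrightarrow> has_pd_u f p 0"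
proof -
  have "has_pd_u (\<lambda>q. - (f q::real)) p 0 \<Longrightarrow> has_pd_u f p 0"
    unfolding has_pd_u_def using has_vector_derivative_minus[of "\<lambda>t. - f (t, snd p)" 0] by simp
  moreover have "has_pd_u f p 0 \<Longrightarrow> has_pd_u (\<lambda>q. - (f q::real)) p 0"
    unfolding has_pd_u_def using has_vector_derivative_minus[of "\<lambda>t. f (t, snd p)" 0] by simp
  ultimately show ?thesis by blast
qed

lemma pd_v_neg0: "has_pd_v (\<lambda>q. - (f q::real)) p 0 \<longleftrightarrow> has_pd_v f p 0"
proof -
  have "has_pd_v (\<lambda>q. - (f q::real)) p 0 \<Longrightarrow> has_pd_v f p 0"
    unfolding has_pd_v_def using has_vector_derivative_minus[of "\<lambda>t. - f (fst p, t)" 0] by simp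
  moreover have "has_pd_v f p 0 \<Longrightarrow> has_pd_v (\<lambda>q. - (f q::real)) p 0"
    unfolding has_pd_v_def using has_vector_derivative_minus[of "\<lambda>t. f (fst p, t)" 0] by simp
  ultimately show ?thesis by blast
qed

lemma pd_u_zero_iff: "has_pd_u f p D \<Longrightarrow> has_pd_u f p 0 \<longleftrightarrow> D = 0"
  unfolding has_pd_u_def using vector_derivative_unique_at by blast

lemma pd_v_zero_iff: "has_pd_v f p D \<Longrightarrow> has_pd_v f p 0 \<longleftrightarrow> D = 0"
  unfolding has_pd_v_def using vector_derivative_unique_at by blast

lemma mul_mat2:
  fixes X :: "real^2^2"
  shows
  "(X ** mat2 a b c d) $1$1 = X$1$1 * a + X$1$2 * c"
  "(X ** mat2 a b c d) $1$2 = X$1$1 * b + X$1$2 * d"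
  "(X ** mat2 a b c d) $2$1 = X$2$1 * a + X$2$2 * c"
  "(X ** mat2 a b c d) $2$2 = X$2$1 * b + X$2$2 * d"
  by (simp_all add: matrix_matrix_mult_def mat2_def sum_2)

lemma num11: fixes X M :: "real^2^2"
  shows "(X ** M)$1$1 * X$2$1 - X$1$1 * (X ** M)$2$1 = - M$2$1 * det X"
  by (simp add: matrix_matrix_mult_def sum_2 det_2 algebra_simps)

lemma ratio11_u:
  fixes P :: "real\<times>real \<Rightarrow> real^2^2"
  assumes "has_pd_u P p (P p ** M)" "det (P p) = 1" "P p $2$1 \<noteq> 0"
  shows "has_pd_u (\<lambda>q. P q$1$1 / P q$2$1) p 0 \<longleftrightarrow> M$2$1 = 0"
proof -
  have "has_pd_u (\<lambda>q. P q$1$1 / P q$2$1) p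
     (((P p ** M)$1$1 * P p$2$1 - P p$1$1 * (P p ** M)$2$1) / (P p$2$1)^2)"
    by (rule pd_u_div[OF pd_u_entry[OF assms(1)] pd_u_entry[OF assms(1)] assms(3)])
  then have "has_pd_u (\<lambda>q. P q$1$1 / P q$2$1) p 0 \<longleftrightarrow>
     ((P p ** M)$1$1 * P p$2$1 - P p$1$1 * (P p ** M)$2$1) / (P p$2$1)^2 = 0"
    by (rule pd_u_zero_iff)
  also have "\<dots> \<longleftrightarrow> M$2$1 = 0" using assms(2,3) by (simp add: num11)
  finally show ?thesis .
qed

lemma ratio11_v:
  fixes P :: "real\<times>real \<Rightarrow> real^2^2"
  assumes "has_pd_v P p (P p ** M)" "det (P p) = 1" "P p $2$1 \<noteq> 0"
  shows "has_pd_v (\<lambda>q. P q$1$1 / P q$2$1) p 0 \<longleftrightarrow> M$2$1 = 0"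
proof -
  have "has_pd_v (\<lambda>q. P q$1$1 / P q$2$1) p
     (((P p ** M)$1$1 * P p$2$1 - P p$1$1 * (P p ** M)$2$1) / (P p$2$1)^2)"
    by (rule pd_v_div[OF pd_v_entry[OF assms(1)] pd_v_entry[OF assms(1)] assms(3)])
  then have "has_pd_v (\<lambda>q. P q$1$1 / P q$2$1) p 0 \<longleftrightarrow>
     ((P p ** M)$1$1 * P p$2$1 - P p$1$1 * (P p ** M)$2$1) / (P p$2$1)^2 = 0"
    by (rule pd_v_zero_iff)
  also have "\<dots> \<longleftrightarrow> M$2$1 = 0" using assms(2,3) by (simp add: num11)
  finally show ?thesis .
qed

lemma num12: fixes X M :: "real^2^2"
  shows "(X ** M)$1$2 * X$2$2 - X$1$2 * (X ** M)$2$2 = M$1$2 * det X"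
  by (simp add: matrix_matrix_mult_def sum_2 det_2 algebra_simps)

lemma ratio12_u:
  fixes P :: "real\<times>real \<Rightarrow> real^2^2"
  assumes "has_pd_u P p (P p ** M)" "det (P p) = 1" "P p $2$2 \<noteq> 0"
  shows "has_pd_u (\<lambda>q. P q$1$2 / P q$2$2) p 0 \<longleftrightarrow> M$1$2 = 0"
proof -
  have "has_pd_u (\<lambda>q. P q$1$2 / P q$2$2) p
     (((P p ** M)$1$2 * P p$2$2 - P p$1$2 * (P p ** M)$2$2) / (P p$2$2)^2)"
    by (rule pd_u_div[OF pd_u_entry[OF assms(1)] pd_u_entry[OF assms(1)] assms(3)])
  then have "has_pd_u (\<lambda>q. P q$1$2 / P q$2$2) p 0 \<longleftrightarrow>
     ((P p ** M)$1$2 * P p$2$2 - P p$1$2 * (P p ** M)$2$2) / (P p$2$2)^2 = 0"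
    by (rule pd_u_zero_iff)
  also have "\<dots> \<longleftrightarrow> M$1$2 = 0" using assms(2,3) by (simp add: num12)
  finally show ?thesis .
qed

lemma ratio12_v:
  fixes P :: "real\<times>real \<Rightarrow> real^2^2"
  assumes "has_pd_v P p (P p ** M)" "det (P p) = 1" "P p $2$2 \<noteq> 0"
  shows "has_pd_v (\<lambda>q. P q$1$2 / P q$2$2) p 0 \<longleftrightarrow> M$1$2 = 0"
proof -
  have "has_pd_v (\<lambda>q. P q$1$2 / P q$2$2) p
     (((P p ** M)$1$2 * P p$2$2 - P p$1$2 * (P p ** M)$2$2) / (P p$2$2)^2)"
    by (rule pd_v_div[OF pd_v_entry[OF assms(1)] pd_v_entry[OF assms(1)] assms(3)])
  then have "has_pd_v (\<lambda>q. P q$1$2 / P q$2$2) p 0 \<longleftrightarrow>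
     ((P p ** M)$1$2 * P p$2$2 - P p$1$2 * (P p ** M)$2$2) / (P p$2$2)^2 = 0"
    by (rule pd_v_zero_iff)
  also have "\<dots> \<longleftrightarrow> M$1$2 = 0" using assms(2,3) by (simp add: num12)
  finally show ?thesis .
qed

lemma num22: fixes X M :: "real^2^2"
  shows "(X ** M)$2$2 * X$1$2 - X$2$2 * (X ** M)$1$2 = - M$1$2 * det X"
  by (simp add: matrix_matrix_mult_def sum_2 det_2 algebra_simps)

lemma ratio22_u:
  fixes P :: "real\<times>real \<Rightarrow> real^2^2"
  assumes "has_pd_u P p (P p ** M)" "det (P p) = 1" "P p $1$2 \<noteq> 0"
  shows "has_pd_u (\<lambda>q. P q$2$2 / P q$1$2) p 0 \<longleftrightarrow> M$1$2 = 0"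
proof -
  have "has_pd_u (\<lambda>q. P q$2$2 / P q$1$2) p
     (((P p ** M)$2$2 * P p$1$2 - P p$2$2 * (P p ** M)$1$2) / (P p$1$2)^2)"
    by (rule pd_u_div[OF pd_u_entry[OF assms(1)] pd_u_entry[OF assms(1)] assms(3)])
  then have "has_pd_u (\<lambda>q. P q$2$2 / P q$1$2) p 0 \<longleftrightarrow>
     ((P p ** M)$2$2 * P p$1$2 - P p$2$2 * (P p ** M)$1$2) / (P p$1$2)^2 = 0"
    by (rule pd_u_zero_iff)
  also have "\<dots> \<longleftrightarrow> M$1$2 = 0" using assms(2,3) by (simp add: num22)
  finally show ?thesis .
qed

lemma ratio22_v:
  fixes P :: "real\<times>real \<Rightarrow> real^2^2"
  assumes "has_pd_v P p (P p ** M)" "det (P p) = 1" "P p $1$2 \<noteq> 0"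
  shows "has_pd_v (\<lambda>q. P q$2$2 / P q$1$2) p 0 \<longleftrightarrow> M$1$2 = 0"
proof -
  have "has_pd_v (\<lambda>q. P q$2$2 / P q$1$2) p
     (((P p ** M)$2$2 * P p$1$2 - P p$2$2 * (P p ** M)$1$2) / (P p$1$2)^2)"
    by (rule pd_v_div[OF pd_v_entry[OF assms(1)] pd_v_entry[OF assms(1)] assms(3)])
  then have "has_pd_v (\<lambda>q. P q$2$2 / P q$1$2) p 0 \<longleftrightarrow>
     ((P p ** M)$2$2 * P p$1$2 - P p$2$2 * (P p ** M)$1$2) / (P p$1$2)^2 = 0"
    by (rule pd_v_zero_iff)
  also have "\<dots> \<longleftrightarrow> M$1$2 = 0" using assms(2,3) by (simp add: num22)
  finally show ?thesis .
qed

lemma num21: fixes X M :: "real^2^2"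
  shows "(X ** M)$2$1 * X$1$1 - X$2$1 * (X ** M)$1$1 = M$2$1 * det X"
  by (simp add: matrix_matrix_mult_def sum_2 det_2 algebra_simps)

lemma ratio21_u:
  fixes P :: "real\<times>real \<Rightarrow> real^2^2"
  assumes "has_pd_u P p (P p ** M)" "det (P p) = 1" "P p $1$1 \<noteq> 0"
  shows "has_pd_u (\<lambda>q. P q$2$1 / P q$1$1) p 0 \<longleftrightarrow> M$2$1 = 0"
proof -
  have "has_pd_u (\<lambda>q. P q$2$1 / P q$1$1) p
     (((P p ** M)$2$1 * P p$1$1 - P p$2$1 * (P p ** M)$1$1) / (P p$1$1)^2)"
    by (rule pd_u_div[OF pd_u_entry[OF assms(1)] pd_u_entry[OF assms(1)] assms(3)])
  then have "has_pd_u (\<lambda>q. P q$2$1 / P q$1$1) p 0 \<longleftrightarrow>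
     ((P p ** M)$2$1 * P p$1$1 - P p$2$1 * (P p ** M)$1$1) / (P p$1$1)^2 = 0"
    by (rule pd_u_zero_iff)
  also have "\<dots> \<longleftrightarrow> M$2$1 = 0" using assms(2,3) by (simp add: num21)
  finally show ?thesis .
qed

lemma ratio21_v:
  fixes P :: "real\<times>real \<Rightarrow> real^2^2"
  assumes "has_pd_v P p (P p ** M)" "det (P p) = 1" "P p $1$1 \<noteq> 0"
  shows "has_pd_v (\<lambda>q. P q$2$1 / P q$1$1) p 0 \<longleftrightarrow> M$2$1 = 0"
proof -
  have "has_pd_v (\<lambda>q. P q$2$1 / P q$1$1) p
     (((P p ** M)$2$1 * P p$1$1 - P p$2$1 * (P p ** M)$1$1) / (P p$1$1)^2)"
    by (rule pd_v_div[OF pd_v_entry[OF assms(1)] pd_v_entry[OF assms(1)] assms(3)])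
  then have "has_pd_v (\<lambda>q. P q$2$1 / P q$1$1) p 0 \<longleftrightarrow>
     ((P p ** M)$2$1 * P p$1$1 - P p$2$1 * (P p ** M)$1$1) / (P p$1$1)^2 = 0"
    by (rule pd_v_zero_iff)
  also have "\<dots> \<longleftrightarrow> M$2$1 = 0" using assms(2,3) by (simp add: num21)
  finally show ?thesis .
qed


theorem theorem13p1:
  fixes M :: "(real \<times> real) set"
    and \<omega> H Q R \<omega>u \<omega>v :: "real \<times> real \<Rightarrow> real"
    and \<Phi>1 \<Phi>2 \<Psi>1 \<Psi>2 :: "real \<times> real \<Rightarrow> real^2^2"
  assumes M_open: "open M" and M_conn: "connected M" and M_sc: "simply_connected M"
    and sm: "smooth_on2 M \<omega>" "smooth_on2 M H" "smooth_on2 M Q" "smooth_on2 M R"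
    and \<omega>_u: "\<forall>p\<in>M. has_pd_u \<omega> p (\<omega>u p)" and \<omega>_v: "\<forall>p\<in>M. has_pd_v \<omega> p (\<omega>v p)"
    and SL: "\<forall>p\<in>M. in_SL2 (\<Phi>1 p) \<and> in_SL2 (\<Phi>2 p) \<and> in_SL2 (\<Psi>1 p) \<and> in_SL2 (\<Psi>2 p)"
    and L1: "\<forall>p\<in>M. has_pd_u \<Phi>1 p (\<Phi>1 p ** U1 (\<omega> p) (\<omega>u p) (H p) (Q p))
                 \<and> has_pd_v \<Phi>1 p (\<Phi>1 p ** V1 (\<omega> p) (\<omega>v p) (H p) (R p))
                 \<and> has_pd_u \<Phi>2 p (\<Phi>2 p ** U2 (\<omega> p) (\<omega>u p) (H p) (Q p))
                 \<and> has_pd_v \<Phi>2 p (\<Phi>2 p ** V2 (\<omega> p) (\<omega>v p) (H p) (R p))"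
    and L2: "\<forall>p\<in>M. has_pd_u \<Psi>1 p (\<Psi>1 p ** U1 (\<omega> p) (\<omega>u p) (H p) (Q p))
                 \<and> has_pd_v \<Psi>1 p (\<Psi>1 p ** V1 (\<omega> p) (\<omega>v p) (H p) (R p))
                 \<and> has_pd_u \<Psi>2 p (\<Psi>2 p ** U2' (\<omega> p) (\<omega>u p) (H p) (Q p))
                 \<and> has_pd_v \<Psi>2 p (\<Psi>2 p ** V2' (\<omega> p) (\<omega>v p) (H p) (R p))"
  shows
    "(\<forall>W. open W \<and> W \<subseteq> M \<and> (\<forall>p\<in>W. \<Phi>1 p $2$1 \<noteq> 0 \<and> \<Phi>2 p $2$1 \<noteq> 0) \<longrightarrow>
        (((\<forall>p\<in>W. has_pd_u (Gp_Phi \<Phi>1 \<Phi>2) p (0,0)) \<longleftrightarrow> (\<forall>p\<in>W. H p = 1 \<and> Q p = 0)) \<and>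
         ((\<forall>p\<in>W. has_pd_v (Gp_Phi \<Phi>1 \<Phi>2) p (0,0)) \<longleftrightarrow> (\<forall>p\<in>W. H p = 1 \<and> R p = 0))))
   \<and> (\<forall>W. open W \<and> W \<subseteq> M \<and> (\<forall>p\<in>W. \<Phi>1 p $2$2 \<noteq> 0 \<and> \<Phi>2 p $2$2 \<noteq> 0) \<longrightarrow>
        (((\<forall>p\<in>W. has_pd_u (Gm_Phi \<Phi>1 \<Phi>2) p (0,0)) \<longleftrightarrow> (\<forall>p\<in>W. H p = -1 \<and> Q p = 0)) \<and>
         ((\<forall>p\<in>W. has_pd_v (Gm_Phi \<Phi>1 \<Phi>2) p (0,0)) \<longleftrightarrow> (\<forall>p\<in>W. H p = -1 \<and> R p = 0))))
   \<and> (\<forall>W. open W \<and> W \<subseteq> M \<and> (\<forall>p\<in>W. \<Psi>1 p $2$1 \<noteq> 0 \<and> \<Psi>2 p $1$2 \<noteq> 0) \<longrightarrow>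
        (((\<forall>p\<in>W. has_pd_u (Gp_Psi \<Psi>1 \<Psi>2) p (0,0)) \<longleftrightarrow> (\<forall>p\<in>W. H p = 1 \<and> Q p = 0)) \<and>
         ((\<forall>p\<in>W. has_pd_v (Gp_Psi \<Psi>1 \<Psi>2) p (0,0)) \<longleftrightarrow> (\<forall>p\<in>W. H p = 1 \<and> R p = 0))))
   \<and> (\<forall>W. open W \<and> W \<subseteq> M \<and> (\<forall>p\<in>W. \<Psi>1 p $2$2 \<noteq> 0 \<and> \<Psi>2 p $1$1 \<noteq> 0) \<longrightarrow>
        (((\<forall>p\<in>W. has_pd_u (Gm_Psi \<Psi>1 \<Psi>2) p (0,0)) \<longleftrightarrow> (\<forall>p\<in>W. H p = -1 \<and> Q p = 0)) \<and>
         ((\<forall>p\<in>W. has_pd_v (Gm_Psi \<Psi>1 \<Psi>2) p (0,0)) \<longleftrightarrow> (\<forall>p\<in>W. H p = -1 \<and> R p = 0))))"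
  proof -
  have part0: "\<forall>W. open W \<and> W \<subseteq> M \<and> (\<forall>p\<in>W. \<Phi>1 p $2$1 \<noteq> 0 \<and> \<Phi>2 p $2$1 \<noteq> 0) \<longrightarrow>
        (((\<forall>p\<in>W. has_pd_u (Gp_Phi \<Phi>1 \<Phi>2) p (0,0)) \<longleftrightarrow> (\<forall>p\<in>W. H p = 1 \<and> Q p = 0)) \<and>
         ((\<forall>p\<in>W. has_pd_v (Gp_Phi \<Phi>1 \<Phi>2) p (0,0)) \<longleftrightarrow> (\<forall>p\<in>W. H p = 1 \<and> R p = 0)))"
  proof (intro allI impI)
    fix W assume A: "open W \<and> W \<subseteq> M \<and> (\<forall>p\<in>W. \<Phi>1 p $2$1 \<noteq> 0 \<and> \<Phi>2 p $2$1 \<noteq> 0)"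
    have Gf: "Gp_Phi \<Phi>1 \<Phi>2 = (\<lambda>q. (\<Phi>1 q$1$1 / \<Phi>1 q$2$1, \<Phi>2 q$1$1 / \<Phi>2 q$2$1))"
      by (simp add: fun_eq_iff Gp_Phi_def)
    have pw: "(has_pd_u (Gp_Phi \<Phi>1 \<Phi>2) p (0,0) \<longleftrightarrow> H p = 1 \<and> Q p = 0) \<and>
              (has_pd_v (Gp_Phi \<Phi>1 \<Phi>2) p (0,0) \<longleftrightarrow> H p = 1 \<and> R p = 0)" if pW: "p \<in> W" for p
    proof -
      have pM: "p \<in> M" using A pW by blast
      have nz1: "\<Phi>1 p $2$1 \<noteq> 0" and nz2: "\<Phi>2 p $2$1 \<noteq> 0" using A pW by auto
      have d1: "det (\<Phi>1 p) = 1" and d2: "det (\<Phi>2 p) = 1" using SL pM by (auto simp: in_SL2_def)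
      note l = L1[rule_format, OF pM]
      have u1: "has_pd_u (\<lambda>q. \<Phi>1 q$1$1 / \<Phi>1 q$2$1) p 0 \<longleftrightarrow> (U1 (\<omega> p) (\<omega>u p) (H p) (Q p))$2$1 = 0"
        by (rule ratio11_u[OF l[THEN conjunct1] d1 nz1])
      have v1: "has_pd_v (\<lambda>q. \<Phi>1 q$1$1 / \<Phi>1 q$2$1) p 0 \<longleftrightarrow> (V1 (\<omega> p) (\<omega>v p) (H p) (R p))$2$1 = 0"
        by (rule ratio11_v[OF l[THEN conjunct2, THEN conjunct1] d1 nz1])
      have u2: "has_pd_u (\<lambda>q. \<Phi>2 q$1$1 / \<Phi>2 q$2$1) p 0 \<longleftrightarrow> (U2 (\<omega> p) (\<omega>u p) (H p) (Q p))$2$1 = 0"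
        by (rule ratio11_u[OF l[THEN conjunct2, THEN conjunct2, THEN conjunct1] d2 nz2])
      have v2: "has_pd_v (\<lambda>q. \<Phi>2 q$1$1 / \<Phi>2 q$2$1) p 0 \<longleftrightarrow> (V2 (\<omega> p) (\<omega>v p) (H p) (R p))$2$1 = 0"
        by (rule ratio11_v[OF l[THEN conjunct2, THEN conjunct2, THEN conjunct2] d2 nz2])
      show ?thesis
        unfolding Gf pd_u_pair0 pd_v_pair0 pd_u_neg0 pd_v_neg0 u1 v1 u2 v2
        by (auto simp: U1_def U2_def V1_def V2_def U2'_def V2'_def mat2_def)
    qed
    show "((\<forall>p\<in>W. has_pd_u (Gp_Phi \<Phi>1 \<Phi>2) p (0,0)) \<longleftrightarrow> (\<forall>p\<in>W. H p = 1 \<and> Q p = 0)) \<and>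
         ((\<forall>p\<in>W. has_pd_v (Gp_Phi \<Phi>1 \<Phi>2) p (0,0)) \<longleftrightarrow> (\<forall>p\<in>W. H p = 1 \<and> R p = 0))"
      using pw by blast
  qed
  have part1: "\<forall>W. open W \<and> W \<subseteq> M \<and> (\<forall>p\<in>W. \<Phi>1 p $2$2 \<noteq> 0 \<and> \<Phi>2 p $2$2 \<noteq> 0) \<longrightarrow>
        (((\<forall>p\<in>W. has_pd_u (Gm_Phi \<Phi>1 \<Phi>2) p (0,0)) \<longleftrightarrow> (\<forall>p\<in>W. H p = -1 \<and> Q p = 0)) \<and>
         ((\<forall>p\<in>W. has_pd_v (Gm_Phi \<Phi>1 \<Phi>2) p (0,0)) \<longleftrightarrow> (\<forall>p\<in>W. H p = -1 \<and> R p = 0)))"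
  proof (intro allI impI)
    fix W assume A: "open W \<and> W \<subseteq> M \<and> (\<forall>p\<in>W. \<Phi>1 p $2$2 \<noteq> 0 \<and> \<Phi>2 p $2$2 \<noteq> 0)"
    have Gf: "Gm_Phi \<Phi>1 \<Phi>2 = (\<lambda>q. (\<Phi>1 q$1$2 / \<Phi>1 q$2$2, \<Phi>2 q$1$2 / \<Phi>2 q$2$2))"
      by (simp add: fun_eq_iff Gm_Phi_def)
    have pw: "(has_pd_u (Gm_Phi \<Phi>1 \<Phi>2) p (0,0) \<longleftrightarrow> H p = -1 \<and> Q p = 0) \<and>
              (has_pd_v (Gm_Phi \<Phi>1 \<Phi>2) p (0,0) \<longleftrightarrow> H p = -1 \<and> R p = 0)" if pW: "p \<in> W" for p
    proof -
      have pM: "p \<in> M" using A pW by blast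
      have nz1: "\<Phi>1 p $2$2 \<noteq> 0" and nz2: "\<Phi>2 p $2$2 \<noteq> 0" using A pW by auto
      have d1: "det (\<Phi>1 p) = 1" and d2: "det (\<Phi>2 p) = 1" using SL pM by (auto simp: in_SL2_def)
      note l = L1[rule_format, OF pM]
      have u1: "has_pd_u (\<lambda>q. \<Phi>1 q$1$2 / \<Phi>1 q$2$2) p 0 \<longleftrightarrow> (U1 (\<omega> p) (\<omega>u p) (H p) (Q p))$1$2 = 0"
        by (rule ratio12_u[OF l[THEN conjunct1] d1 nz1])
      have v1: "has_pd_v (\<lambda>q. \<Phi>1 q$1$2 / \<Phi>1 q$2$2) p 0 \<longleftrightarrow> (V1 (\<omega> p) (\<omega>v p) (H p) (R p))$1$2 = 0"
        by (rule ratio12_v[OF l[THEN conjunct2, THEN conjunct1] d1 nz1])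
      have u2: "has_pd_u (\<lambda>q. \<Phi>2 q$1$2 / \<Phi>2 q$2$2) p 0 \<longleftrightarrow> (U2 (\<omega> p) (\<omega>u p) (H p) (Q p))$1$2 = 0"
        by (rule ratio12_u[OF l[THEN conjunct2, THEN conjunct2, THEN conjunct1] d2 nz2])
      have v2: "has_pd_v (\<lambda>q. \<Phi>2 q$1$2 / \<Phi>2 q$2$2) p 0 \<longleftrightarrow> (V2 (\<omega> p) (\<omega>v p) (H p) (R p))$1$2 = 0"
        by (rule ratio12_v[OF l[THEN conjunct2, THEN conjunct2, THEN conjunct2] d2 nz2])
      show ?thesis
        unfolding Gf pd_u_pair0 pd_v_pair0 pd_u_neg0 pd_v_neg0 u1 v1 u2 v2
        by (auto simp: U1_def U2_def V1_def V2_def U2'_def V2'_def mat2_def)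
    qed
    show "((\<forall>p\<in>W. has_pd_u (Gm_Phi \<Phi>1 \<Phi>2) p (0,0)) \<longleftrightarrow> (\<forall>p\<in>W. H p = -1 \<and> Q p = 0)) \<and>
         ((\<forall>p\<in>W. has_pd_v (Gm_Phi \<Phi>1 \<Phi>2) p (0,0)) \<longleftrightarrow> (\<forall>p\<in>W. H p = -1 \<and> R p = 0))"
      using pw by blast
  qed
  have part2: "\<forall>W. open W \<and> W \<subseteq> M \<and> (\<forall>p\<in>W. \<Psi>1 p $2$1 \<noteq> 0 \<and> \<Psi>2 p $1$2 \<noteq> 0) \<longrightarrow>
        (((\<forall>p\<in>W. has_pd_u (Gp_Psi \<Psi>1 \<Psi>2) p (0,0)) \<longleftrightarrow> (\<forall>p\<in>W. H p = 1 \<and> Q p = 0)) \<and>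
         ((\<forall>p\<in>W. has_pd_v (Gp_Psi \<Psi>1 \<Psi>2) p (0,0)) \<longleftrightarrow> (\<forall>p\<in>W. H p = 1 \<and> R p = 0)))"
  proof (intro allI impI)
    fix W assume A: "open W \<and> W \<subseteq> M \<and> (\<forall>p\<in>W. \<Psi>1 p $2$1 \<noteq> 0 \<and> \<Psi>2 p $1$2 \<noteq> 0)"
    have Gf: "Gp_Psi \<Psi>1 \<Psi>2 = (\<lambda>q. (\<Psi>1 q$1$1 / \<Psi>1 q$2$1, - (\<Psi>2 q$2$2 / \<Psi>2 q$1$2)))"
      by (simp add: fun_eq_iff Gp_Psi_def)
    have pw: "(has_pd_u (Gp_Psi \<Psi>1 \<Psi>2) p (0,0) \<longleftrightarrow> H p = 1 \<and> Q p = 0) \<and>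
              (has_pd_v (Gp_Psi \<Psi>1 \<Psi>2) p (0,0) \<longleftrightarrow> H p = 1 \<and> R p = 0)" if pW: "p \<in> W" for p
    proof -
      have pM: "p \<in> M" using A pW by blast
      have nz1: "\<Psi>1 p $2$1 \<noteq> 0" and nz2: "\<Psi>2 p $1$2 \<noteq> 0" using A pW by auto
      have d1: "det (\<Psi>1 p) = 1" and d2: "det (\<Psi>2 p) = 1" using SL pM by (auto simp: in_SL2_def)
      note l = L2[rule_format, OF pM]
      have u1: "has_pd_u (\<lambda>q. \<Psi>1 q$1$1 / \<Psi>1 q$2$1) p 0 \<longleftrightarrow> (U1 (\<omega> p) (\<omega>u p) (H p) (Q p))$2$1 = 0"
        by (rule ratio11_u[OF l[THEN conjunct1] d1 nz1])
      have v1: "has_pd_v (\<lambda>q. \<Psi>1 q$1$1 / \<Psi>1 q$2$1) p 0 \<longleftrightarrow> (V1 (\<omega> p) (\<omega>v p) (H p) (R p))$2$1 = 0"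
        by (rule ratio11_v[OF l[THEN conjunct2, THEN conjunct1] d1 nz1])
      have u2: "has_pd_u (\<lambda>q. \<Psi>2 q$2$2 / \<Psi>2 q$1$2) p 0 \<longleftrightarrow> (U2' (\<omega> p) (\<omega>u p) (H p) (Q p))$1$2 = 0"
        by (rule ratio22_u[OF l[THEN conjunct2, THEN conjunct2, THEN conjunct1] d2 nz2])
      have v2: "has_pd_v (\<lambda>q. \<Psi>2 q$2$2 / \<Psi>2 q$1$2) p 0 \<longleftrightarrow> (V2' (\<omega> p) (\<omega>v p) (H p) (R p))$1$2 = 0"
        by (rule ratio22_v[OF l[THEN conjunct2, THEN conjunct2, THEN conjunct2] d2 nz2])
      show ?thesis
        unfolding Gf pd_u_pair0 pd_v_pair0 pd_u_neg0 pd_v_neg0 u1 v1 u2 v2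
        by (auto simp: U1_def U2_def V1_def V2_def U2'_def V2'_def mat2_def)
    qed
    show "((\<forall>p\<in>W. has_pd_u (Gp_Psi \<Psi>1 \<Psi>2) p (0,0)) \<longleftrightarrow> (\<forall>p\<in>W. H p = 1 \<and> Q p = 0)) \<and>
         ((\<forall>p\<in>W. has_pd_v (Gp_Psi \<Psi>1 \<Psi>2) p (0,0)) \<longleftrightarrow> (\<forall>p\<in>W. H p = 1 \<and> R p = 0))"
      using pw by blast
  qed
  have part3: "\<forall>W. open W \<and> W \<subseteq> M \<and> (\<forall>p\<in>W. \<Psi>1 p $2$2 \<noteq> 0 \<and> \<Psi>2 p $1$1 \<noteq> 0) \<longrightarrow>
        (((\<forall>p\<in>W. has_pd_u (Gm_Psi \<Psi>1 \<Psi>2) p (0,0)) \<longleftrightarrow> (\<forall>p\<in>W. H p = -1 \<and> Q p = 0)) \<and>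
         ((\<forall>p\<in>W. has_pd_v (Gm_Psi \<Psi>1 \<Psi>2) p (0,0)) \<longleftrightarrow> (\<forall>p\<in>W. H p = -1 \<and> R p = 0)))"
  proof (intro allI impI)
    fix W assume A: "open W \<and> W \<subseteq> M \<and> (\<forall>p\<in>W. \<Psi>1 p $2$2 \<noteq> 0 \<and> \<Psi>2 p $1$1 \<noteq> 0)"
    have Gf: "Gm_Psi \<Psi>1 \<Psi>2 = (\<lambda>q. (\<Psi>1 q$1$2 / \<Psi>1 q$2$2, - (\<Psi>2 q$2$1 / \<Psi>2 q$1$1)))"
      by (simp add: fun_eq_iff Gm_Psi_def)
    have pw: "(has_pd_u (Gm_Psi \<Psi>1 \<Psi>2) p (0,0) \<longleftrightarrow> H p = -1 \<and> Q p = 0) \<and>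
              (has_pd_v (Gm_Psi \<Psi>1 \<Psi>2) p (0,0) \<longleftrightarrow> H p = -1 \<and> R p = 0)" if pW: "p \<in> W" for p
    proof -
      have pM: "p \<in> M" using A pW by blast
      have nz1: "\<Psi>1 p $2$2 \<noteq> 0" and nz2: "\<Psi>2 p $1$1 \<noteq> 0" using A pW by auto
      have d1: "det (\<Psi>1 p) = 1" and d2: "det (\<Psi>2 p) = 1" using SL pM by (auto simp: in_SL2_def)
      note l = L2[rule_format, OF pM]
      have u1: "has_pd_u (\<lambda>q. \<Psi>1 q$1$2 / \<Psi>1 q$2$2) p 0 \<longleftrightarrow> (U1 (\<omega> p) (\<omega>u p) (H p) (Q p))$1$2 = 0"
        by (rule ratio12_u[OF l[THEN conjunct1] d1 nz1])
      have v1: "has_pd_v (\<lambda>q. \<Psi>1 q$1$2 / \<Psi>1 q$2$2) p 0 \<longleftrightarrow> (V1 (\<omega> p) (\<omega>v p) (H p) (R p))$1$2 = 0"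
        by (rule ratio12_v[OF l[THEN conjunct2, THEN conjunct1] d1 nz1])
      have u2: "has_pd_u (\<lambda>q. \<Psi>2 q$2$1 / \<Psi>2 q$1$1) p 0 \<longleftrightarrow> (U2' (\<omega> p) (\<omega>u p) (H p) (Q p))$2$1 = 0"
        by (rule ratio21_u[OF l[THEN conjunct2, THEN conjunct2, THEN conjunct1] d2 nz2])
      have v2: "has_pd_v (\<lambda>q. \<Psi>2 q$2$1 / \<Psi>2 q$1$1) p 0 \<longleftrightarrow> (V2' (\<omega> p) (\<omega>v p) (H p) (R p))$2$1 = 0"
        by (rule ratio21_v[OF l[THEN conjunct2, THEN conjunct2, THEN conjunct2] d2 nz2])
      show ?thesis
        unfolding Gf pd_u_pair0 pd_v_pair0 pd_u_neg0 pd_v_neg0 u1 v1 u2 v2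
        by (auto simp: U1_def U2_def V1_def V2_def U2'_def V2'_def mat2_def)
    qed
    show "((\<forall>p\<in>W. has_pd_u (Gm_Psi \<Psi>1 \<Psi>2) p (0,0)) \<longleftrightarrow> (\<forall>p\<in>W. H p = -1 \<and> Q p = 0)) \<and>
         ((\<forall>p\<in>W. has_pd_v (Gm_Psi \<Psi>1 \<Psi>2) p (0,0)) \<longleftrightarrow> (\<forall>p\<in>W. H p = -1 \<and> R p = 0))"
      using pw by blast
  qed
  show ?thesis using part0 part1 part2 part3 by blast
qed

end
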